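(* Let $n\ge0$. For all $i,j\in\{1,\dots,\widetilde\mu_n\}$, the $(i,j)$-entry of $\chi^{(n)}$ is $$\chi^{(n)}_{i,j}=\frac{1}{d_n}\sum_{a=1}^{d_n}p_n\!\left(\mathbf{e}\!\left[\frac{a}{d_n}\right]\right)\mathbf{e}\!\left[\frac{a}{d_n}(i-j)\right].$$
   Context: Fix integers $a_1,a_2,\ldots\ge2$, $d_0=1$, $d_i=a_1\cdots a_i$, $\widetilde\mu_n=\sum_{i=0}^n(-1)^{n-i}d_i$, $\mathbf{e}[\alpha]=\exp(2\pi\sqrt{-1}\alpha)$. $\chi^{(n)}$ is the $\widetilde\mu_n\times\widetilde\mu_n$ matrix $1/\varphi_n(N)$, where $N=(\delta_{i+1,j})$ is the nilpotent shift matrix and $\varphi_n(t)=\prod_{i=0}^n(1-t^{d_i})^{(-1)^{n-i}}$ for $n\ge1$, $\varphi_0(t)=1-t$ (expand $1/\varphi_n(t)$ as a power series in $t$ and substitute $N$). $p_n(t)=\prod_{i=1}^n(1-t^{d_{i-1}})^{(-1)^{n-i}}$ for $n\ge1$ and $p_0(t)=1$; $p_n$ is a polynomial. *)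

theory Defs
  imports Complex_Main "Jordan_Normal_Form.Matrix"
    "HOL-Computational_Algebra.Formal_Power_Series"
    "HOL-Computational_Algebra.Polynomial_FPS"
begin

text \<open>The sequence a_1, a_2, ... is a function a :: nat => nat (a 0 unused).\<close>

definition dd :: "(nat \<Rightarrow> nat) \<Rightarrow> nat \<Rightarrow> nat" where
  "dd a i = (\<Prod>k\<in>{1..i}. a k)"

definition mu_tilde :: "(nat \<Rightarrow> nat) \<Rightarrow> nat \<Rightarrow> int" where
  "mu_tilde a n = (\<Sum>i\<in>{0..n}. (-1) ^ (n - i) * int (dd a i))"

definition ee :: "real \<Rightarrow> complex" where
  "ee \<alpha> = exp (2 * of_real pi * \<i> * of_real \<alpha>)"

definition fac_fps :: "nat \<Rightarrow> nat \<Rightarrow> complex fps" where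
  "fac_fps e m = (if even e then 1 - fps_X ^ m else inverse (1 - fps_X ^ m))"

definition phi_fps :: "(nat \<Rightarrow> nat) \<Rightarrow> nat \<Rightarrow> complex fps" where
  "phi_fps a n = (if n = 0 then 1 - fps_X
     else (\<Prod>i\<in>{0..n}. fac_fps (n - i) (dd a i)))"

text \<open>p_n(t) = prod_{i=1}^n (1 - t^{d_{i-1}})^{(-1)^{n-i}} (p_0 = 1), as a power series;
  p_n is a polynomial, and p_poly is that polynomial.\<close>
definition p_fps :: "(nat \<Rightarrow> nat) \<Rightarrow> nat \<Rightarrow> complex fps" where
  "p_fps a n = (\<Prod>i\<in>{1..n}. fac_fps (n - i) (dd a (i - 1)))"

definition p_poly :: "(nat \<Rightarrow> nat) \<Rightarrow> nat \<Rightarrow> complex poly" where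
  "p_poly a n = (THE p. fps_of_poly p = p_fps a n)"

definition shift_mat :: "nat \<Rightarrow> complex mat" where
  "shift_mat m = mat m m (\<lambda>(i, j). if i + 1 = j then 1 else 0)"

text \<open>chi^{(n)} = 1/phi_n(N) = sum_k c_k N^k, where 1/phi_n(t) = sum_k c_k t^k;
  the sum is finite since N^m = 0 for the m x m shift matrix.\<close>
definition chi :: "(nat \<Rightarrow> nat) \<Rightarrow> nat \<Rightarrow> complex mat" where
  "chi a n = (let m = nat (mu_tilde a n); c = inverse (phi_fps a n) in
     foldr (\<lambda>k A. fps_nth c k \<cdot>\<^sub>m (shift_mat m ^\<^sub>m k) + A) [0..<m] (0\<^sub>m m m))"

end

theory Submission
  imports Defs
begin


lemma dd_0[simp]: "dd a 0 = 1" by (simp add: dd_def)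
lemma dd_Suc: "dd a (Suc n) = dd a n * a (Suc n)" by (simp add: dd_def prod.cl_ivl_Suc)

lemma mu_Suc: "mu_tilde a (Suc n) = int (dd a (Suc n)) - mu_tilde a n"
proof -
  have "mu_tilde a (Suc n) = (\<Sum>i\<in>{0..n}. (-1) ^ (Suc n - i) * int (dd a i)) + int (dd a (Suc n))"
    by (simp add: mu_tilde_def sum.cl_ivl_Suc)
  also have "(\<Sum>i\<in>{0..n}. (-1) ^ (Suc n - i) * int (dd a i)) = - mu_tilde a n"
    unfolding mu_tilde_def sum_negf[symmetric]
    by (rule sum.cong) (auto simp: Suc_diff_le)
  finally show ?thesis by simp
qed

lemma mu_0[simp]: "mu_tilde a 0 = 1" by (simp add: mu_tilde_def)



lemma fac_fps_SS[simp]: "fac_fps (Suc (Suc e)) m = fac_fps e m"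
  by (simp add: fac_fps_def)


lemma fac_fps_inv: "m > 0 \<Longrightarrow> fac_fps (Suc e) m * fac_fps e m = 1"
proof -
  assume m: "m > 0"
  have h: "fps_nth (1 - fps_X ^ m :: complex fps) 0 \<noteq> 0" using m by simp
  show ?thesis
  proof (cases "even e")
    case True then show ?thesis using inverse_mult_eq_1[OF h] by (simp add: fac_fps_def)
  next
    case False then show ?thesis using inverse_mult_eq_1'[OF h] by (simp add: fac_fps_def)
  qed
qed

lemma dd_pos: assumes "\<And>k. k \<ge> 1 \<Longrightarrow> a k \<ge> 2" shows "dd a n > 0"
proof (induction n)
  case (Suc n) then show ?case using assms[of "Suc n"] by (simp add: dd_Suc)
qed simp

lemma p_fps_0[simp]: "p_fps a 0 = 1" by (simp add: p_fps_def)
lemma p_fps_1: "p_fps a (Suc 0) = 1 - fps_X" by (simp add: p_fps_def fac_fps_def)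

lemma p_fps_SS: "p_fps a (Suc (Suc n)) = p_fps a n * fac_fps 1 (dd a n) * fac_fps 0 (dd a (Suc n))"
proof -
  have "p_fps a (Suc (Suc n)) = (\<Prod>i\<in>{1..n}. fac_fps (Suc (Suc n) - i) (dd a (i - 1)))
      * fac_fps 1 (dd a n) * fac_fps 0 (dd a (Suc n))"
    by (simp add: p_fps_def prod.cl_ivl_Suc)
  also have "(\<Prod>i\<in>{1..n}. fac_fps (Suc (Suc n) - i) (dd a (i - 1))) = p_fps a n"
    unfolding p_fps_def by (rule prod.cong) (auto simp: Suc_diff_le)
  finally show ?thesis .
qed

lemma phi_p: assumes "\<And>k. k \<ge> 1 \<Longrightarrow> a k \<ge> 2"
  shows "phi_fps a n * p_fps a n = 1 - fps_X ^ dd a n"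
proof (cases n)
  case 0 then show ?thesis by (simp add: phi_fps_def)
next
  case (Suc m)
  have 1: "phi_fps a n = (\<Prod>i\<in>{0..m}. fac_fps (Suc m - i) (dd a i)) * fac_fps 0 (dd a (Suc m))"
    using Suc by (simp add: phi_fps_def prod.cl_ivl_Suc)
  have 2: "p_fps a n = (\<Prod>i\<in>{0..m}. fac_fps (m - i) (dd a i))"
    using Suc unfolding p_fps_def
    using prod.shift_bounds_cl_Suc_ivl[where m=0 and n=m and g="\<lambda>i. fac_fps (Suc m - i) (dd a (i - 1))"]
    by simp
  have 3: "(\<Prod>i\<in>{0..m}. fac_fps (Suc m - i) (dd a i)) * (\<Prod>i\<in>{0..m}. fac_fps (m - i) (dd a i)) = 1"
    unfolding prod.distrib[symmetric]
    by (rule prod.neutral) (auto simp: Suc_diff_le fac_fps_inv dd_pos[OF assms])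
  have "phi_fps a n * p_fps a n = fac_fps 0 (dd a (Suc m))"
    unfolding 1 2 using 3 by (metis mult.commute mult.left_commute mult_1_right)
  then show ?thesis using Suc by (simp add: fac_fps_def)
qed

fun qp :: "(nat \<Rightarrow> nat) \<Rightarrow> nat \<Rightarrow> complex poly" where
  "qp a 0 = 1"
| "qp a (Suc 0) = [:1, -1:]"
| "qp a (Suc (Suc n)) = qp a n * (\<Sum>t<a (Suc n). monom 1 (t * dd a n))"

lemma qp_fps: assumes "\<And>k. k \<ge> 1 \<Longrightarrow> a k \<ge> 2"
  shows "fps_of_poly (qp a n) = p_fps a n"
proof (induction n rule: less_induct)
  case (less n)
  show ?case
  proof (cases n)
    case 0 then show ?thesis by simp
  next
    case (Suc m)
    show ?thesis
    proof (cases m)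
      case 0 then show ?thesis using Suc by (simp add: p_fps_1 fps_of_poly_pCons)
    next
      case (Suc k)
      have IH: "fps_of_poly (qp a k) = p_fps a k" using less `n = Suc m` Suc by simp
      have dk: "dd a k > 0" by (rule dd_pos[OF assms])
      have G: "fps_of_poly (\<Sum>t<a (Suc k). monom (1::complex) (t * dd a k)) = (\<Sum>t<a (Suc k). (fps_X ^ dd a k) ^ t)"
        unfolding fps_of_poly_sum
        by (intro sum.cong refl) (simp add: fps_of_poly_monom' power_mult[symmetric] mult.commute)
      have h: "fps_nth (1 - fps_X ^ dd a k :: complex fps) 0 \<noteq> 0" using dk by simp
      have "fac_fps 1 (dd a k) * fac_fps 0 (dd a (Suc k)) = 
         inverse (1 - fps_X ^ dd a k) * ((1 - fps_X ^ dd a k) * (\<Sum>t<a (Suc k). (fps_X ^ dd a k) ^ t))"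
        by (simp add: fac_fps_def dd_Suc power_mult one_diff_power_eq[symmetric])
      also have "\<dots> = (\<Sum>t<a (Suc k). (fps_X ^ dd a k) ^ t)"
        by (simp add: mult.assoc[symmetric] inverse_mult_eq_1[OF h])
      finally show ?thesis using `n = Suc m` Suc IH G
        by (simp add: p_fps_SS fps_of_poly_mult mult.assoc)
    qed
  qed
qed



lemma shift_dims[simp]: "dim_row (shift_mat m) = m" "dim_col (shift_mat m) = m"
  by (simp_all add: shift_mat_def)

lemma shift_entry: "r < m \<Longrightarrow> s < m \<Longrightarrow> shift_mat m $$ (r, s) = (if r + 1 = s then 1 else 0)"
  by (simp add: shift_mat_def)

lemma shift_pow: "r < m \<Longrightarrow> s < m \<Longrightarrow> (shift_mat m ^\<^sub>m k) $$ (r, s) = (if s = r + k then 1 else 0)"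
proof (induction k arbitrary: s)
  case 0 then show ?case by simp
next
  case (Suc k)
  have "(shift_mat m ^\<^sub>m Suc k) $$ (r, s) = (\<Sum>t<m. (shift_mat m ^\<^sub>m k) $$ (r, t) * shift_mat m $$ (t, s))"
    using Suc.prems by (simp add: scalar_prod_def lessThan_atLeast0)
  also have "\<dots> = (\<Sum>t<m. if t = r + k then (if t + 1 = s then 1 else 0) else 0)"
    using Suc by (intro sum.cong refl) (simp add: shift_entry)
  also have "\<dots> = (if s = r + Suc k then 1 else 0)"
    using Suc.prems by (auto simp: sum.delta')
  finally show ?case .
qed

lemma foldr_entry:
  assumes "r < m" "s < m"
  shows "foldr (\<lambda>k A. c k \<cdot>\<^sub>m (shift_mat m ^\<^sub>m k) + A) xs (0\<^sub>m m m) $$ (r, s)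
    = (\<Sum>k\<leftarrow>xs. c k * (if s = r + k then 1 else 0))
    \<and> dim_row (foldr (\<lambda>k A. c k \<cdot>\<^sub>m (shift_mat m ^\<^sub>m k) + A) xs (0\<^sub>m m m)) = m
    \<and> dim_col (foldr (\<lambda>k A. c k \<cdot>\<^sub>m (shift_mat m ^\<^sub>m k) + A) xs (0\<^sub>m m m)) = m"
  using assms by (induction xs) (auto simp: shift_pow)

lemma chi_entry:
  assumes "r < nat (mu_tilde a n)" "s < nat (mu_tilde a n)"
  shows "chi a n $$ (r, s) = (if r \<le> s then fps_nth (inverse (phi_fps a n)) (s - r) else 0)"
proof -
  let ?m = "nat (mu_tilde a n)"
  let ?c = "fps_nth (inverse (phi_fps a n))"
  have "chi a n $$ (r, s) = (\<Sum>k\<leftarrow>[0..<?m]. ?c k * (if s = r + k then 1 else 0))"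
    unfolding chi_def Let_def using foldr_entry[OF assms] by blast
  also have "\<dots> = (\<Sum>k\<in>{0..<?m}. ?c k * (if s = r + k then 1 else 0))"
    by (simp add: sum_set_upt_conv_sum_list_nat[symmetric])
  also have "\<dots> = (\<Sum>k\<in>{0..<?m}. if k = s - r \<and> r \<le> s then ?c k else 0)"
    by (intro sum.cong refl) auto
  also have "\<dots> = (if r \<le> s then ?c (s - r) else 0)"
    using assms by (auto simp: sum.delta')
  finally show ?thesis .
qed



lemma ee_cis: "ee x = cis (2 * pi * x)"
  by (simp add: ee_def cis_conv_exp mult_ac)

lemma ee_add: "ee x * ee y = ee (x + y)"
  by (simp add: ee_def exp_add[symmetric] distrib_left)

lemma ee_pow: "ee x ^ l = ee (real l * x)"
  by (simp add: ee_def exp_of_nat_mult[symmetric] mult_ac)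

lemma ee_int: "ee (of_int z) = 1"
  unfolding ee_cis by (rule cis_multiple_2pi) simp

lemma ee_eq_1: assumes "ee x = 1" shows "\<exists>z::int. x = of_int z"
proof -
  have "cos (2 * pi * x) = 1" using assms unfolding ee_cis
    by (metis complex.sel(1) cis.sel(1) one_complex.sel(1))
  then obtain z :: int where "2 * pi * x = real_of_int z * 2 * pi" using cos_one_2pi_int by blast
  then have "x = z" by simp
  then show ?thesis by blast
qed

lemma root_sum:
  fixes D :: nat and e :: int
  assumes D: "D > 0"
  shows "(\<Sum>b=1..D. ee (real b / real D * of_int e)) = (if int D dvd e then of_nat D else 0)"
proof -
  define w where "w = ee (of_int e / real D)"
  have 1: "ee (real b / real D * of_int e) = w ^ b" for b
    unfolding w_def ee_pow by (simp add: field_simps)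
  have wD: "w ^ D = 1"
    unfolding w_def ee_pow using D by (simp add: ee_int)
  show ?thesis
  proof (cases "int D dvd e")
    case True
    then obtain z where "e = int D * z" by (auto elim: dvdE)
    then have "w = 1" unfolding w_def using D by (simp add: ee_int)
    then show ?thesis using True 1 by simp
  next
    case False
    have "w \<noteq> 1"
    proof
      assume "w = 1"
      then have "\<exists>z::int. of_int e / real D = of_int z" using ee_eq_1 unfolding w_def by blast
      then obtain z :: int where z: "of_int e / real D = of_int z" by blast
      then have "real_of_int e = real_of_int (int D * z)" using D by (simp add: field_simps)
      then have "e = int D * z" by linarith
      then show False using False by simp
    qed
    have "(\<Sum>b=1..D. ee (real b / real D * of_int e)) = (\<Sum>b=Suc 0..D. w ^ b)"
      using 1 by simp
    also have "\<dots> = (\<Sum>b<D. w ^ Suc b)" by (rule sum.atLeast1_atMost_eq)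
    also have "\<dots> = w * (\<Sum>b<D. w ^ b)" by (simp add: sum_distrib_left)
    also have "\<dots> = 0" using geometric_sum[OF \<open>w \<noteq> 1\<close>, of D] wD by simp
    finally show ?thesis using False by simp
  qed
qed



lemma mu_bounds: assumes A: "\<And>k. k \<ge> 1 \<Longrightarrow> a k \<ge> 2"
  shows "1 \<le> mu_tilde a n \<and> mu_tilde a n \<le> int (dd a n)"
proof (induction n)
  case 0 then show ?case by simp
next
  case (Suc n)
  have dp: "dd a n > 0" by (rule dd_pos) (rule A)
  have "dd a (Suc n) \<ge> 2 * dd a n" using A[of "Suc n"] dp by (simp add: dd_Suc)
  moreover have "dd a n \<ge> 1" using dp by simp
  ultimately show ?case using Suc by (simp add: mu_Suc)
qed

lemma qp_deg: assumes A: "\<And>k. k \<ge> 1 \<Longrightarrow> a k \<ge> 2"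
  shows "int (degree (qp a n)) \<le> int (dd a n) - mu_tilde a n"
proof (induction n rule: less_induct)
  case (less n)
  show ?case
  proof (cases n)
    case 0 then show ?thesis by simp
  next
    case (Suc m)
    show ?thesis
    proof (cases m)
      case 0 then show ?thesis using Suc by (simp add: mu_Suc dd_Suc)
    next
      case (Suc k)
      have IH: "int (degree (qp a k)) \<le> int (dd a k) - mu_tilde a k" using less `n = Suc m` Suc by simp
      have ak: "a (Suc k) \<ge> 1" using A[of "Suc k"] by simp
      have G: "degree (\<Sum>t<a (Suc k). monom (1::complex) (t * dd a k)) \<le> (a (Suc k) - 1) * dd a k"
      proof (rule degree_sum_le)
        fix p assume "p \<in> {..<a (Suc k)}"
        then have "p * dd a k \<le> (a (Suc k) - 1) * dd a k" by (intro mult_le_mono1) auto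
        then show "degree (monom (1::complex) (p * dd a k)) \<le> (a (Suc k) - 1) * dd a k"
          using degree_monom_le order.trans by blast
      qed simp
      have "degree (qp a n) \<le> degree (qp a k) + (a (Suc k) - 1) * dd a k"
        using `n = Suc m` Suc order.trans[OF degree_mult_le add_left_mono[OF G]] by simp
      then have h1: "int (degree (qp a n)) \<le> int (degree (qp a k)) + int ((a (Suc k) - 1) * dd a k)"
        by (metis of_nat_add of_nat_mono)
      have h3: "mu_tilde a n = int (dd a n) - (int (dd a (Suc k)) - mu_tilde a k)"
        using `n = Suc m` Suc by (simp add: mu_Suc)
      have h2: "int ((a (Suc k) - 1) * dd a k) = int (dd a (Suc k)) - int (dd a k)"
        using ak by (simp add: dd_Suc of_nat_diff algebra_simps)
      show ?thesis using h1 h2 h3 IH by linarith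
    qed
  qed
qed



theorem lemma4p2:
  fixes a :: "nat \<Rightarrow> nat" and n i j :: nat
  assumes "\<And>k. k \<ge> 1 \<Longrightarrow> a k \<ge> 2"
    and "1 \<le> i" and "int i \<le> mu_tilde a n"
    and "1 \<le> j" and "int j \<le> mu_tilde a n"
  shows "chi a n $$ (i - 1, j - 1) =
    (1 / of_nat (dd a n)) * (\<Sum>b = 1..dd a n.
       poly (p_poly a n) (ee (real b / real (dd a n))) *
       ee (real b / real (dd a n) * (real_of_int (int i - int j))))"
proof -
  note A = assms(1)
  define D where "D = dd a n"
  define q where "q = qp a n"
  define R where "R = inverse (phi_fps a n)"
  have Dpos: "D > 0" unfolding D_def by (rule dd_pos) (rule A)
  have mb: "1 \<le> mu_tilde a n \<and> mu_tilde a n \<le> int D" unfolding D_def by (rule mu_bounds) (rule A)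
  have deg: "int (degree q) \<le> int D - mu_tilde a n" unfolding D_def q_def by (rule qp_deg) (rule A)
  have qP: "fps_of_poly q = p_fps a n" unfolding q_def by (rule qp_fps) (rule A)
  have pp: "p_poly a n = q"
    unfolding p_poly_def
  proof (rule the_equality)
    fix p assume "fps_of_poly p = p_fps a n"
    then show "p = q" using qP by (simp add: fps_of_poly_eq_iff[symmetric])
  qed (rule qP)
  have Rk: "fps_nth R k = coeff q k" if "k < D" for k
  proof -
    have pp1: "phi_fps a n * p_fps a n = 1 - fps_X ^ D" unfolding D_def by (rule phi_p) (rule A)
    have "fps_nth (phi_fps a n * p_fps a n) 0 = 1" using pp1 Dpos by simp
    then have h0: "fps_nth (phi_fps a n) 0 \<noteq> 0" by auto
    have "R * (1 - fps_X ^ D) = R * phi_fps a n * p_fps a n" using pp1 by (simp add: mult.assoc)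
    also have "\<dots> = p_fps a n" unfolding R_def using inverse_mult_eq_1[OF h0] by simp
    finally have e: "R * (1 - fps_X ^ D) = p_fps a n" .
    have "fps_nth (R * (1 - fps_X ^ D)) k = fps_nth R k"
      using that by (simp add: right_diff_distrib fps_X_power_mult_right_nth)
    then show ?thesis using e qP[symmetric] by simp
  qed
  have i1: "i - 1 < nat (mu_tilde a n)" "j - 1 < nat (mu_tilde a n)" using assms by linarith+
  have LHS: "chi a n $$ (i - 1, j - 1) = (if i \<le> j then coeff q (j - i) else 0)"
    unfolding chi_entry[OF i1] R_def[symmetric] using assms mb by (auto simp: Rk)
  have s1: "poly q (ee (real b / real D)) * ee (real b / real D * (real_of_int (int i - int j)))
     = (\<Sum>l\<le>degree q. coeff q l * ee (real b / real D * of_int (int l + int i - int j)))" for b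
    unfolding poly_altdef sum_distrib_right
  proof (intro sum.cong refl)
    fix l
    have ar: "real l * (real b / real D) + real b / real D * (real_of_int (int i - int j))
        = real b / real D * of_int (int l + int i - int j)" by (simp add: algebra_simps add_divide_distrib diff_divide_distrib)
    show "coeff q l * ee (real b / real D) ^ l * ee (real b / real D * real_of_int (int i - int j)) =
         coeff q l * ee (real b / real D * real_of_int (int l + int i - int j))"
      by (simp only: ee_pow mult.assoc ee_add ar)
  qed
  have "(\<Sum>b = 1..D. poly q (ee (real b / real D)) * ee (real b / real D * (real_of_int (int i - int j))))
     = (\<Sum>l\<le>degree q. coeff q l * (\<Sum>b = 1..D. ee (real b / real D * of_int (int l + int i - int j))))"
    unfolding s1 sum_distrib_left by (rule sum.swap)
  also have "\<dots> = (\<Sum>l\<le>degree q. coeff q l * (if int D dvd (int l + int i - int j) then of_nat D else 0))"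
    by (intro sum.cong refl) (simp only: root_sum[OF Dpos])
  finally have s2: "(1 / of_nat D) * (\<Sum>b = 1..D. poly q (ee (real b / real D)) * ee (real b / real D * (real_of_int (int i - int j))))
     = (\<Sum>l\<le>degree q. (if int D dvd (int l + int i - int j) then coeff q l else 0))"
    using Dpos by (simp add: sum_distrib_left, intro sum.cong refl, simp)
  have dv: "int D dvd (int l + int i - int j) \<longleftrightarrow> (l = j - i \<and> i \<le> j)" if "l \<le> degree q" for l
  proof
    assume d: "int D dvd (int l + int i - int j)"
    have "int l + int i - int j = 0"
    proof (rule ccontr)
      assume "int l + int i - int j \<noteq> 0"
      from dvd_imp_le_int[OF this d] have "int D \<le> \<bar>int l + int i - int j\<bar>" by simp
      then show False using that deg assms mb by linarith
    qed
    then show "l = j - i \<and> i \<le> j" by linarith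
  qed auto
  have "(\<Sum>l\<le>degree q. (if int D dvd (int l + int i - int j) then coeff q l else 0))
      = (\<Sum>l\<le>degree q. (if l = j - i then (if i \<le> j then coeff q l else 0) else 0))"
    by (intro sum.cong refl) (auto simp: dv)
  also have "\<dots> = (if i \<le> j then coeff q (j - i) else 0)"
    by (auto simp: sum.delta coeff_eq_0)
  finally show ?thesis using LHS s2 pp D_def by simp
qed


end
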